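(* Let $A$ be an irreducible abstract state space and $B$ an abstract state space. Then every isomorphism state $\omega \in A\otimes_{\max} B$ (if any exists) is pure in $A\otimes_{\max} B$, i.e., lies on an extremal ray of the positive cone of $A\otimes_{\max} B$ (equivalently, $\hat\omega$ lies on an extremal ray of the cone of positive linear maps $A^*\to B$).
   Context: An abstract state space is a pair $(A,u_A)$ where $A$ is a finite-dimensional real vector space with a closed, pointed, generating convex cone $A_+$, and $u_A$ is a strictly positive linear functional (an interior point of the dual cone $A^*_+=\{f\in A^*: f(A_+)\subseteq[0,\infty)\}$). $A$ is irreducible if it admits no decomposition $A=A_1\oplus A_2$ with $A_1,A_2$ nonzero subspaces and $A_+=(A_+\cap A_1)+(A_+\cap A_2)$. $A\otimes_{\max}B$ is the space of bilinear forms on $A^*\times B^*$, with positive cone consisting of forms $\omega$ with $\omega(a,b)\ge0$ for all $a\in A^*_+$, $b\in B^*_+$; a state is a positive such $\omega$ with $\omega(u_A,u_B)=1$. For a bilinear form $\omega$, define $\hat\omega:A^*\to B=B^{**}$ by $\hat\omega(a)(b)=\omega(a,b)$. A state $\omega$ is an isomorphism state if $\hat\omega:A^*\to B$ is an order-isomorphism, i.e., a linear bijection with $\hat\omega(a)\in B_+$ iff $a\in A^*_+$. *)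

theory Defs
  imports "HOL-Analysis.Analysis"
begin

text \<open>The dual space is identified with the space itself via the inner product:
  the functional f corresponds to the vector y with f(x) = y \<bullet> x.\<close>

definition dual_cone :: "'a::euclidean_space set \<Rightarrow> 'a set" where
  "dual_cone K = {y. \<forall>x\<in>K. 0 \<le> y \<bullet> x}"

definition closed_pointed_generating_cone :: "'a::euclidean_space set \<Rightarrow> bool" where
  "closed_pointed_generating_cone K \<longleftrightarrow>
     closed K \<and> convex K \<and> cone K \<and> K \<inter> uminus ` K = {0} \<and>
     {x - y | x y. x \<in> K \<and> y \<in> K} = UNIV"

text \<open>An abstract state space (A, u_A): positive cone K and order unit u (as a dual vector),
  u an interior point of the dual cone.\<close>
definition abstract_state_space :: "'a::euclidean_space set \<Rightarrow> 'a \<Rightarrow> bool" where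
  "abstract_state_space K u \<longleftrightarrow> closed_pointed_generating_cone K \<and> u \<in> interior (dual_cone K)"

definition irreducible_cone :: "'a::euclidean_space set \<Rightarrow> bool" where
  "irreducible_cone K \<longleftrightarrow>
     \<not> (\<exists>A1 A2. subspace A1 \<and> subspace A2 \<and> A1 \<noteq> {0} \<and> A2 \<noteq> {0} \<and>
            A1 \<inter> A2 = {0} \<and> {x + y | x y. x \<in> A1 \<and> y \<in> A2} = UNIV \<and>
            K = {x + y | x y. x \<in> K \<inter> A1 \<and> y \<in> K \<inter> A2})"

text \<open>Positive elements of A \<otimes>max B: bilinear forms on A* \<times> B*, nonnegative on A*_+ \<times> B*_+.\<close>
definition max_tensor_positive ::
  "'a::euclidean_space set \<Rightarrow> 'b::euclidean_space set \<Rightarrow> ('a \<Rightarrow> 'b \<Rightarrow> real) \<Rightarrow> bool" where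
  "max_tensor_positive KA KB \<omega> \<longleftrightarrow> bilinear \<omega> \<and>
     (\<forall>a\<in>dual_cone KA. \<forall>b\<in>dual_cone KB. 0 \<le> \<omega> a b)"

definition max_tensor_state ::
  "'a::euclidean_space set \<Rightarrow> 'a \<Rightarrow> 'b::euclidean_space set \<Rightarrow> 'b \<Rightarrow> ('a \<Rightarrow> 'b \<Rightarrow> real) \<Rightarrow> bool" where
  "max_tensor_state KA uA KB uB \<omega> \<longleftrightarrow> max_tensor_positive KA KB \<omega> \<and> \<omega> uA uB = 1"

text \<open>\<omega>-hat : A* \<rightarrow> B = B**, the vector v in B with v \<bullet> b = \<omega> a b for all b.\<close>
definition omega_hat :: "('a::euclidean_space \<Rightarrow> 'b::euclidean_space \<Rightarrow> real) \<Rightarrow> 'a \<Rightarrow> 'b" where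
  "omega_hat \<omega> a = (\<Sum>i\<in>Basis. \<omega> a i *\<^sub>R i)"

definition isomorphism_state ::
  "'a::euclidean_space set \<Rightarrow> 'a \<Rightarrow> 'b::euclidean_space set \<Rightarrow> 'b \<Rightarrow> ('a \<Rightarrow> 'b \<Rightarrow> real) \<Rightarrow> bool" where
  "isomorphism_state KA uA KB uB \<omega> \<longleftrightarrow> max_tensor_state KA uA KB uB \<omega> \<and>
     linear (omega_hat \<omega>) \<and> bij (omega_hat \<omega>) \<and>
     (\<forall>a. omega_hat \<omega> a \<in> KB \<longleftrightarrow> a \<in> dual_cone KA)"

definition pure_max_tensor ::
  "'a::euclidean_space set \<Rightarrow> 'b::euclidean_space set \<Rightarrow> ('a \<Rightarrow> 'b \<Rightarrow> real) \<Rightarrow> bool" where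
  "pure_max_tensor KA KB \<omega> \<longleftrightarrow> max_tensor_positive KA KB \<omega> \<and> (\<exists>a b. \<omega> a b \<noteq> 0) \<and>
     (\<forall>\<omega>1 \<omega>2. max_tensor_positive KA KB \<omega>1 \<and> max_tensor_positive KA KB \<omega>2 \<and>
        (\<forall>a b. \<omega> a b = \<omega>1 a b + \<omega>2 a b) \<longrightarrow> (\<exists>t\<ge>0. \<forall>a b. \<omega>1 a b = t * \<omega> a b))"

end

theory Submission
  imports Defs
begin

lemma dual_dual:
  fixes K :: "'a::euclidean_space set"
  assumes "closed K" "convex K" "cone K" "0 \<in> K"
  shows "dual_cone (dual_cone K) = K"
proof
  show "K \<subseteq> dual_cone (dual_cone K)"
    by (auto simp: dual_cone_def inner_commute)
  show "dual_cone (dual_cone K) \<subseteq> K"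
  proof
    fix z assume z: "z \<in> dual_cone (dual_cone K)"
    show "z \<in> K"
    proof (rule ccontr)
      assume "z \<notin> K"
      then obtain a b where ab: "a \<bullet> z < b" "\<forall>x\<in>K. b < a \<bullet> x"
        using separating_hyperplane_closed_point[OF assms(2,1)] by blast
      have b0: "b < 0" using ab(2) assms(4) by force
      have "a \<in> dual_cone K"
        unfolding dual_cone_def
      proof (clarify, rule ccontr)
        fix x assume x: "x \<in> K" and n: "\<not> 0 \<le> a \<bullet> x"
        define c where "c = b / (a \<bullet> x)"
        have c0: "c \<ge> 0" using b0 n by (simp add: c_def divide_nonpos_neg)
        have "c *\<^sub>R x \<in> K" using assms(3) x c0 by (simp add: cone_def)
        moreover have "a \<bullet> (c *\<^sub>R x) = b" using n by (simp add: c_def)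
        ultimately show False using ab(2) by force
      qed
      with z have "0 \<le> a \<bullet> z" by (auto simp: dual_cone_def inner_commute)
      with ab b0 show False by linarith
    qed
  qed
qed

lemma int_dual_bound:
  fixes K :: "'a::euclidean_space set"
  assumes "u \<in> interior (dual_cone K)"
  shows "\<exists>e>0. \<forall>x\<in>K. e * norm x \<le> u \<bullet> x"
proof -
  obtain e where e: "e > 0" "ball u e \<subseteq> dual_cone K"
    using assms by (meson mem_interior)
  show ?thesis
  proof (intro exI[of _ "e/2"] conjI ballI)
    show "e/2 > 0" using e by simp
    fix x assume x: "x \<in> K"
    show "e/2 * norm x \<le> u \<bullet> x"
    proof (cases "x = 0")
      case True then show ?thesis by simp
    next
      case False
      define y where "y = u - (e/2 / norm x) *\<^sub>R x"
      have "dist u y < e" using False e by (simp add: y_def dist_norm)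
      then have "y \<in> dual_cone K" using e by auto
      then have "0 \<le> y \<bullet> x" using x by (auto simp: dual_cone_def)
      also have "y \<bullet> x = u \<bullet> x - e/2 * norm x"
        using False by (simp add: y_def inner_diff_left dot_square_norm power2_eq_square)
      finally show ?thesis by simp
    qed
  qed
qed

lemma omega_hat_inner:
  fixes \<omega> :: "'a::euclidean_space \<Rightarrow> 'b::euclidean_space \<Rightarrow> real"
  assumes "bilinear \<omega>"
  shows "omega_hat \<omega> a \<bullet> b = \<omega> a b"
proof -
  have lin: "linear (\<omega> a)" using assms by (simp add: bilinear_def)
  have "\<omega> a b = \<omega> a (\<Sum>i\<in>Basis. (b \<bullet> i) *\<^sub>R i)" by (simp add: euclidean_representation)
  also have "\<dots> = (\<Sum>i\<in>Basis. (b \<bullet> i) * \<omega> a i)"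
    by (simp add: linear_sum[OF lin] linear_scale[OF lin])
  also have "\<dots> = omega_hat \<omega> a \<bullet> b"
    unfolding omega_hat_def inner_sum_left by (rule sum.cong) (auto simp: inner_commute)
  finally show ?thesis by simp
qed

lemma omega_hat_linear:
  fixes \<omega> :: "'a::euclidean_space \<Rightarrow> 'b::euclidean_space \<Rightarrow> real"
  assumes "bilinear \<omega>"
  shows "linear (omega_hat \<omega>)"
  by (simp add: linear_iff omega_hat_def bilinear_ladd[OF assms] bilinear_lmul[OF assms]
      scaleR_add_left sum.distrib scaleR_sum_right)

lemma surj_on_imp_inj_on:
  fixes f :: "'a::euclidean_space \<Rightarrow> 'a"
  assumes lf: "linear f" and S: "subspace S" and fS: "f ` S = S"
  shows "inj_on f S"
proof -
  obtain B where B: "B \<subseteq> S" "independent B" "S \<subseteq> span B" "card B = dim S"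
    using basis_exists by blast
  have fin: "finite B" using B(2) independent_bound by blast
  have fBS: "f ` B \<subseteq> S" using B(1) fS by blast
  have Sspan: "S \<subseteq> span (f ` B)"
  proof -
    have "S = f ` S" using fS by simp
    also have "\<dots> \<subseteq> f ` span B" using B(3) by blast
    also have "\<dots> = span (f ` B)" by (simp add: span_linear_image lf)
    finally show ?thesis .
  qed
  have c1: "card (f ` B) \<le> dim S" using B(4) card_image_le[OF fin] by simp
  have ind: "independent (f ` B)"
    using card_le_dim_spanning[OF fBS Sspan finite_imageI[OF fin] c1] .
  have "dim S \<le> card (f ` B)" using span_card_ge_dim[OF fBS Sspan finite_imageI[OF fin]] .
  then have "card (f ` B) = card B" using c1 B(4) by simp
  then have "inj_on f B" using eq_card_imp_inj_on fin by (metis card_image_le order_refl inj_on_iff_eq_card)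
  then have "inj_on f (span B)" using linear_inj_on_span_independent_image[OF lf ind] by blast
  then show ?thesis using B(3) inj_on_subset by blast
qed

lemma key_scalar:
  fixes K :: "'a::euclidean_space set" and T :: "'a \<Rightarrow> 'a"
  assumes cpg: "closed_pointed_generating_cone K"
    and uint: "u \<in> interior (dual_cone K)"
    and irr: "irreducible_cone K"
    and lin: "linear T"
    and T1: "\<And>x. x \<in> K \<Longrightarrow> T x \<in> K"
    and T2: "\<And>x. x \<in> K \<Longrightarrow> x - T x \<in> K"
  shows "\<exists>t\<ge>0. \<forall>x. T x = t *\<^sub>R x"
proof -
  have clK: "closed K" and cvK: "convex K" and coK: "cone K"
    and pt: "K \<inter> uminus ` K = {0}" and gen: "{x - y | x y. x \<in> K \<and> y \<in> K} = UNIV"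
    using cpg by (auto simp: closed_pointed_generating_cone_def)
  have add: "x + y \<in> K" if "x \<in> K" "y \<in> K" for x y
    using convex_cone[of K] cvK coK that by blast
  have scl: "c *\<^sub>R x \<in> K" if "x \<in> K" "c \<ge> 0" for x c
    using coK that by (simp add: cone_def)
  have K0: "0 \<in> K" using pt by auto
  obtain \<epsilon> where \<epsilon>: "\<epsilon> > 0" "\<forall>x\<in>K. \<epsilon> * norm x \<le> u \<bullet> x"
    using int_dual_bound[OF uint] by blast
  have pos: "u \<bullet> x > 0" if "x \<in> K" "x \<noteq> 0" for x
  proof -
    have "\<epsilon> * norm x > 0" using \<epsilon>(1) that by simp
    then show ?thesis using \<epsilon>(2) that(1) by fastforce
  qed
  have nn: "u \<bullet> x \<ge> 0" if "x \<in> K" for x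
    using pos[of x] that by (cases "x = 0") auto
  define S where "S = {x\<in>K. u \<bullet> x = 1}"
  have cvS: "convex S" unfolding S_def
    using convex_Int[OF cvK convex_hyperplane[of u 1]] by (simp add: Int_def)
  have clS: "closed S" unfolding S_def
    using closed_Int[OF clK closed_hyperplane[of u 1]] by (simp add: Int_def)
  have bdS: "bounded S"
  proof -
    have "S \<subseteq> cball 0 (1/\<epsilon>)"
    proof
      fix x assume "x \<in> S"
      then have "\<epsilon> * norm x \<le> 1" using \<epsilon>(2) by (auto simp: S_def)
      then show "x \<in> cball 0 (1/\<epsilon>)" using \<epsilon>(1) by (simp add: field_simps)
    qed
    then show ?thesis using bounded_cball bounded_subset by blast
  qed
  have cpS: "compact S" using bdS clS compact_eq_bounded_closed by blast
  define E where "E = {x. x extreme_point_of S}"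
  have KM: "S = convex hull E" unfolding E_def using Krein_Milman_Minkowski[OF cpS cvS] .
  have ES: "E \<subseteq> S" unfolding E_def by (auto simp: extreme_point_of_def)
  have toS: "(1 / (u \<bullet> x)) *\<^sub>R x \<in> S" if "x \<in> K" "x \<noteq> 0" for x
    using pos[OF that] that scl[of x "1 / (u \<bullet> x)"] by (auto simp: S_def)
  have fromS: "x = (u \<bullet> x) *\<^sub>R ((1 / (u \<bullet> x)) *\<^sub>R x)" if "x \<in> K" "x \<noteq> 0" for x
    using pos[OF that] by simp
  have eig: "\<exists>l. 0 \<le> l \<and> l \<le> 1 \<and> T e = l *\<^sub>R e" if eE: "e \<in> E" for e
  proof -
    have eS: "e \<in> S" using eE ES by blast
    then have eK: "e \<in> K" and ue: "u \<bullet> e = 1" by (auto simp: S_def)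
    define a where "a = T e"
    define b where "b = e - T e"
    have aK: "a \<in> K" and bK: "b \<in> K" using T1 T2 eK by (auto simp: a_def b_def)
    have sum1: "u \<bullet> a + u \<bullet> b = 1" using ue by (simp add: a_def b_def inner_diff_right)
    show ?thesis
    proof (cases "a = 0")
      case True then show ?thesis by (intro exI[of _ 0]) (simp add: a_def)
    next
      case an: False
      show ?thesis
      proof (cases "b = 0")
        case True then show ?thesis by (intro exI[of _ 1]) (simp add: b_def)
      next
        case bn: False
        define \<alpha> where "\<alpha> = u \<bullet> a"
        have \<alpha>0: "\<alpha> > 0" using pos[OF aK an] by (simp add: \<alpha>_def)
        have \<alpha>1: "\<alpha> < 1" using pos[OF bK bn] sum1 by (simp add: \<alpha>_def)
        define s1 where "s1 = (1/\<alpha>) *\<^sub>R a"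
        define s2 where "s2 = (1/(1-\<alpha>)) *\<^sub>R b"
        have ub: "u \<bullet> b = 1 - \<alpha>" using sum1 by (simp add: \<alpha>_def)
        have s1S: "s1 \<in> S" using toS[OF aK an] by (simp add: s1_def \<alpha>_def)
        have s2S: "s2 \<in> S" using toS[OF bK bn] by (simp add: s2_def ub)
        have esum: "e = \<alpha> *\<^sub>R s1 + (1 - \<alpha>) *\<^sub>R s2"
          using \<alpha>0 \<alpha>1 by (simp add: s1_def s2_def a_def b_def)
        show ?thesis
        proof (cases "e = s1")
          case True
          have "\<alpha> *\<^sub>R s1 = a" using \<alpha>0 by (simp add: s1_def)
          then have "T e = \<alpha> *\<^sub>R e" using True by (simp add: a_def)
          then show ?thesis using \<alpha>0 \<alpha>1 by (intro exI[of _ \<alpha>]) simp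
        next
          case ne1: False
          show ?thesis
          proof (cases "e = s2")
            case True
            then have "b = (1 - \<alpha>) *\<^sub>R e" using \<alpha>1 by (simp add: s2_def)
            then have "T e = \<alpha> *\<^sub>R e" by (simp add: b_def algebra_simps)
            then show ?thesis using \<alpha>0 \<alpha>1 by (intro exI[of _ \<alpha>]) simp
          next
            case ne2: False
            have "s1 \<noteq> s2" using ne1 esum by (auto simp: algebra_simps simp flip: scaleR_add_left)
            then have "e \<in> open_segment s1 s2"
              unfolding in_segment using esum \<alpha>0 \<alpha>1
              by (intro conjI exI[of _ "1 - \<alpha>"]) auto
            then have False using eE s1S s2S by (auto simp: E_def extreme_point_of_def)
            then show ?thesis ..
          qed
        qed
      qed
    qed
  qed
  obtain x0 where x0: "x0 \<in> K" "x0 \<noteq> 0"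
  proof -
    obtain i :: 'a where i: "i \<in> Basis" using nonempty_Basis by blast
    then have i0: "i \<noteq> 0" by auto
    have "i \<in> {x - y | x y. x \<in> K \<and> y \<in> K}" using gen by simp
    then obtain x y where "x \<in> K" "y \<in> K" "i = x - y" by blast
    then show ?thesis using that i0 by (cases "x = 0") auto
  qed
  have "S \<noteq> {}" using toS[OF x0] by blast
  then obtain e1 where e1: "e1 \<in> E" using KM by auto
  obtain \<mu> where \<mu>: "0 \<le> \<mu>" "T e1 = \<mu> *\<^sub>R e1" using eig[OF e1] by blast
  define N where "N = {x. T x = \<mu> *\<^sub>R x}"
  define D where "D = (\<lambda>x. T x - \<mu> *\<^sub>R x)"
  have linD: "linear D" unfolding linear_iff D_def
    using linear_add[OF lin] linear_scale[OF lin] by (simp add: algebra_simps)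
  define R where "R = range D"
  have subN: "subspace N" unfolding subspace_def N_def
    using linear_add[OF lin] linear_scale[OF lin] linear_0[OF lin] by (simp add: algebra_simps)
  have subR: "subspace R" unfolding subspace_def R_def
  proof (intro conjI ballI allI)
    show "0 \<in> range D" using linear_0[OF linD] by (metis rangeI)
    fix x y assume "x \<in> range D" "y \<in> range D"
    then obtain a b where "x = D a" "y = D b" by blast
    then have "x + y = D (a + b)" using linear_add[OF linD] by simp
    then show "x + y \<in> range D" by blast
  next
    fix c x assume "x \<in> range D"
    then obtain a where "x = D a" by blast
    then have "c *\<^sub>R x = D (c *\<^sub>R a)" using linear_scale[OF linD] by simp
    then show "c *\<^sub>R x \<in> range D" by blast
  qed
  have ESK: "e \<in> K" "e \<noteq> 0" if "e \<in> E" for e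
    using that ES by (auto simp: S_def)
  show ?thesis
  proof (cases "\<forall>e\<in>E. T e = \<mu> *\<^sub>R e")
    case True
    then have "E \<subseteq> N" by (auto simp: N_def)
    then have SN: "S \<subseteq> N" using KM hull_minimal subspace_imp_convex[OF subN] by metis
    have KN: "K \<subseteq> N"
    proof
      fix x assume x: "x \<in> K"
      show "x \<in> N"
      proof (cases "x = 0")
        case True then show ?thesis using subspace_0[OF subN] by simp
      next
        case False
        have "(1 / (u \<bullet> x)) *\<^sub>R x \<in> N" using toS[OF x False] SN by blast
        then have "(u \<bullet> x) *\<^sub>R ((1 / (u \<bullet> x)) *\<^sub>R x) \<in> N" using subspace_scale[OF subN] by blast
        then show ?thesis using fromS[OF x False] by simp
      qed
    qed
    have "v \<in> N" for v
    proof -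
      have "v \<in> {x - y | x y. x \<in> K \<and> y \<in> K}" using gen by simp
      then obtain x y where "x \<in> K" "y \<in> K" "v = x - y" by blast
      then show ?thesis using KN subspace_diff[OF subN] by blast
    qed
    then show ?thesis using \<mu>(1) by (auto simp: N_def)
  next
    case False
    then obtain e2 where e2: "e2 \<in> E" "T e2 \<noteq> \<mu> *\<^sub>R e2" by blast
    have inR: "e \<in> R" if eEn: "e \<in> E" "T e \<noteq> \<mu> *\<^sub>R e" for e
    proof -
      obtain l where l: "T e = l *\<^sub>R e" using eig[OF eEn(1)] by blast
      with eEn have lm: "l \<noteq> \<mu>" by auto
      have De: "D e = (l - \<mu>) *\<^sub>R e" by (simp add: D_def l algebra_simps)
      have "D ((1 / (l - \<mu>)) *\<^sub>R e) = (1 / (l - \<mu>)) *\<^sub>R ((l - \<mu>) *\<^sub>R e)"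
        using linear_scale[OF linD] De by simp
      also have "\<dots> = e" using lm by simp
      finally have "D ((1 / (l - \<mu>)) *\<^sub>R e) = e" .
      then show ?thesis unfolding R_def by (metis rangeI)
    qed
    define P where "P = {x + y | x y. x \<in> K \<inter> N \<and> y \<in> K \<inter> R}"
    have EP: "E \<subseteq> P"
    proof
      fix e assume e: "e \<in> E"
      show "e \<in> P"
      proof (cases "T e = \<mu> *\<^sub>R e")
        case True
        then have "e = e + 0" "e \<in> K \<inter> N" "0 \<in> K \<inter> R"
          using ESK[OF e] K0 subspace_0[OF subR] by (auto simp: N_def)
        then show ?thesis unfolding P_def by blast
      next
        case False
        then have "e = 0 + e" "0 \<in> K \<inter> N" "e \<in> K \<inter> R"
          using ESK[OF e] K0 subspace_0[OF subN] inR[OF e] by auto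
        then show ?thesis unfolding P_def by blast
      qed
    qed
    have cvP: "convex P"
    proof (rule convexI)
      fix p q and a b :: real
      assume p: "p \<in> P" and q: "q \<in> P" and ab0: "0 \<le> a" "0 \<le> b" "a + b = 1"
      then have ab: "0 \<le> a \<and> 0 \<le> b" by simp
      obtain x1 y1 where 1: "p = x1 + y1" "x1 \<in> K \<inter> N" "y1 \<in> K \<inter> R" using p P_def by blast
      obtain x2 y2 where 2: "q = x2 + y2" "x2 \<in> K \<inter> N" "y2 \<in> K \<inter> R" using q P_def by blast
      have "a *\<^sub>R p + b *\<^sub>R q = (a *\<^sub>R x1 + b *\<^sub>R x2) + (a *\<^sub>R y1 + b *\<^sub>R y2)"
        using 1 2 by (simp add: algebra_simps)
      moreover have "a *\<^sub>R x1 + b *\<^sub>R x2 \<in> K \<inter> N"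
        using 1 2 ab add scl subspace_add[OF subN] subspace_scale[OF subN] by auto
      moreover have "a *\<^sub>R y1 + b *\<^sub>R y2 \<in> K \<inter> R"
        using 1 2 ab add scl subspace_add[OF subR] subspace_scale[OF subR] by auto
      ultimately show "a *\<^sub>R p + b *\<^sub>R q \<in> P" unfolding P_def by blast
    qed
    have SP: "S \<subseteq> P" using KM EP cvP hull_minimal by metis
    have KP: "K \<subseteq> P"
    proof
      fix x assume x: "x \<in> K"
      show "x \<in> P"
      proof (cases "x = 0")
        case True
        then have "x = 0 + 0" "0 \<in> K \<inter> N" "0 \<in> K \<inter> R"
          using K0 subspace_0[OF subN] subspace_0[OF subR] by auto
        then show ?thesis unfolding P_def by blast
      next
        case False
        define c where "c = u \<bullet> x"
        have c0: "c \<ge> 0" using nn[OF x] by (simp add: c_def)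
        have "(1 / c) *\<^sub>R x \<in> P" using toS[OF x False] SP by (auto simp: c_def)
        then obtain x1 y1 where 1: "(1/c) *\<^sub>R x = x1 + y1" "x1 \<in> K \<inter> N" "y1 \<in> K \<inter> R"
          using P_def by blast
        have "x = c *\<^sub>R ((1/c) *\<^sub>R x)" using fromS[OF x False] by (simp only: c_def)
        then have "x = c *\<^sub>R x1 + c *\<^sub>R y1"
          using 1(1) by (simp add: scaleR_add_right[symmetric])
        moreover have "c *\<^sub>R x1 \<in> K \<inter> N" "c *\<^sub>R y1 \<in> K \<inter> R"
          using 1 c0 scl subspace_scale[OF subN] subspace_scale[OF subR] by auto
        ultimately show ?thesis unfolding P_def by blast
      qed
    qed
    have PK: "P \<subseteq> K" unfolding P_def using add by blast
    have NR: "{x + y | x y. x \<in> N \<and> y \<in> R} = UNIV"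
    proof -
      have "v \<in> {x + y | x y. x \<in> N \<and> y \<in> R}" for v
      proof -
        have "v \<in> {x - y | x y. x \<in> K \<and> y \<in> K}" using gen by simp
        then obtain x y where xy: "x \<in> K" "y \<in> K" "v = x - y" by blast
        obtain x1 y1 where 1: "x = x1 + y1" "x1 \<in> N" "y1 \<in> R" using KP xy(1) P_def by blast
        obtain x2 y2 where 2: "y = x2 + y2" "x2 \<in> N" "y2 \<in> R" using KP xy(2) P_def by blast
        have "v = (x1 - x2) + (y1 - y2)" using xy 1 2 by (simp add: algebra_simps)
        moreover have "x1 - x2 \<in> N" "y1 - y2 \<in> R"
          using 1 2 subspace_diff[OF subN] subspace_diff[OF subR] by auto
        ultimately show ?thesis by blast
      qed
      then show ?thesis by blast
    qed
    have DN: "D x = 0" if "x \<in> N" for x using that by (simp add: N_def D_def)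
    have DR: "D ` R = R"
    proof
      show "D ` R \<subseteq> R" unfolding R_def by blast
      show "R \<subseteq> D ` R"
      proof
        fix r assume "r \<in> R"
        then obtain v where v: "r = D v" unfolding R_def by blast
        have "v \<in> {x + y | x y. x \<in> N \<and> y \<in> R}" using NR by simp
        then obtain n r' where nr: "v = n + r'" "n \<in> N" "r' \<in> R" by blast
        have "r = D r'" using v nr linear_add[OF linD] DN by simp
        then show "r \<in> D ` R" using nr(3) by blast
      qed
    qed
    have injD: "inj_on D R" using surj_on_imp_inj_on[OF linD subR DR] .
    have NR0: "N \<inter> R = {0}"
    proof
      show "{0} \<subseteq> N \<inter> R" using subspace_0[OF subN] subspace_0[OF subR] by auto
      show "N \<inter> R \<subseteq> {0}"
      proof
        fix x assume x: "x \<in> N \<inter> R"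
        have "D x = D 0" using DN x linear_0[OF linD] by simp
        then show "x \<in> {0}" using injD x subspace_0[OF subR] by (auto dest: inj_onD)
      qed
    qed
    have N0: "N \<noteq> {0}" using e1 ESK[OF e1] \<mu>(2) by (auto simp: N_def)
    have R0: "R \<noteq> {0}" using inR[OF e2] ESK[OF e2(1)] by auto
    have "K = P" using KP PK by blast
    then have False using irr subN subR N0 R0 NR0 NR
      unfolding irreducible_cone_def P_def by blast
    then show ?thesis ..
  qed
qed
theorem corollary3p5:
  fixes KA :: "'a::euclidean_space set" and uA :: 'a
    and KB :: "'b::euclidean_space set" and uB :: 'b
    and \<omega> :: "'a \<Rightarrow> 'b \<Rightarrow> real"
  assumes "abstract_state_space KA uA"
    and "irreducible_cone KA"
    and "abstract_state_space KB uB"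
    and "isomorphism_state KA uA KB uB \<omega>"
  shows "pure_max_tensor KA KB \<omega>"
proof -
  have cpgA: "closed_pointed_generating_cone KA" and uAi: "uA \<in> interior (dual_cone KA)"
    using assms(1) by (auto simp: abstract_state_space_def)
  have cpgB: "closed_pointed_generating_cone KB"
    using assms(3) by (auto simp: abstract_state_space_def)
  have ddA: "dual_cone (dual_cone KA) = KA"
    using cpgA by (intro dual_dual) (auto simp: closed_pointed_generating_cone_def)
  have ddB: "dual_cone (dual_cone KB) = KB"
    using cpgB by (intro dual_dual) (auto simp: closed_pointed_generating_cone_def)
  define \<phi> where "\<phi> = omega_hat \<omega>"
  have posw: "max_tensor_positive KA KB \<omega>" and w1: "\<omega> uA uB = 1"
    and linphi: "linear \<phi>" and bij: "bij \<phi>"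
    and iso: "\<And>a. \<phi> a \<in> KB \<longleftrightarrow> a \<in> dual_cone KA"
    using assms(4) by (auto simp: isomorphism_state_def max_tensor_state_def \<phi>_def)
  have bw: "bilinear \<omega>" using posw by (simp add: max_tensor_positive_def)
  have phiin: "\<phi> a \<bullet> b = \<omega> a b" for a b using omega_hat_inner[OF bw] by (simp add: \<phi>_def)
  obtain g where glin: "linear g" and gphi: "g \<circ> \<phi> = id"
    using linear_injective_left_inverse[OF linphi] bij bij_is_inj by blast
  have phig: "\<phi> (g y) = y" for y
  proof -
    obtain x where "y = \<phi> x" using bij bij_is_surj by (metis surj_def)
    then show ?thesis using gphi by (metis comp_apply id_apply)
  qed
  have rest: "\<exists>t\<ge>0. \<forall>a b. \<omega>1 a b = t * \<omega> a b"
    if p1: "max_tensor_positive KA KB \<omega>1" and p2: "max_tensor_positive KA KB \<omega>2"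
      and sm: "\<forall>a b. \<omega> a b = \<omega>1 a b + \<omega>2 a b" for \<omega>1 \<omega>2
  proof -
    have b1: "bilinear \<omega>1" and b2: "bilinear \<omega>2"
      using p1 p2 by (auto simp: max_tensor_positive_def)
    define \<psi>1 where "\<psi>1 = omega_hat \<omega>1"
    define \<psi>2 where "\<psi>2 = omega_hat \<omega>2"
    have in1: "\<psi>1 a \<bullet> b = \<omega>1 a b" for a b using omega_hat_inner[OF b1] by (simp add: \<psi>1_def)
    have in2: "\<psi>2 a \<bullet> b = \<omega>2 a b" for a b using omega_hat_inner[OF b2] by (simp add: \<psi>2_def)
    have l1: "linear \<psi>1" using omega_hat_linear[OF b1] by (simp add: \<psi>1_def)
    have psiK1: "\<psi>1 a \<in> KB" if aC: "a \<in> dual_cone KA" for a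
    proof -
      have "\<psi>1 a \<in> dual_cone (dual_cone KB)"
      proof -
        have "0 \<le> \<psi>1 a \<bullet> b" if b: "b \<in> dual_cone KB" for b
        proof -
          have "0 \<le> \<omega>1 a b" using p1 aC b by (simp add: max_tensor_positive_def)
          then show ?thesis by (simp add: in1)
        qed
        then show ?thesis by (simp add: dual_cone_def[of "dual_cone KB"])
      qed
      then show ?thesis using ddB by simp
    qed
    have psiK2: "\<psi>2 a \<in> KB" if aC: "a \<in> dual_cone KA" for a
    proof -
      have "\<psi>2 a \<in> dual_cone (dual_cone KB)"
      proof -
        have "0 \<le> \<psi>2 a \<bullet> b" if b: "b \<in> dual_cone KB" for b
        proof -
          have "0 \<le> \<omega>2 a b" using p2 aC b by (simp add: max_tensor_positive_def)
          then show ?thesis by (simp add: in2)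
        qed
        then show ?thesis by (simp add: dual_cone_def[of "dual_cone KB"])
      qed
      then show ?thesis using ddB by simp
    qed
    have phisum: "\<phi> a = \<psi>1 a + \<psi>2 a" for a
    proof -
      have "(\<phi> a - (\<psi>1 a + \<psi>2 a)) \<bullet> b = 0" for b
        using sm by (simp add: inner_diff_left inner_add_left phiin in1 in2)
      then have "(\<phi> a - (\<psi>1 a + \<psi>2 a)) \<bullet> (\<phi> a - (\<psi>1 a + \<psi>2 a)) = 0" by blast
      then show ?thesis by simp
    qed
    define S1 where "S1 = g \<circ> \<psi>1"
    have lS1: "linear S1" unfolding S1_def using linear_compose[OF l1 glin] .
    have phiS1: "\<phi> (S1 a) = \<psi>1 a" for a by (simp add: S1_def phig)
    have S1C: "S1 a \<in> dual_cone KA" if "a \<in> dual_cone KA" for a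
      using iso[of "S1 a"] phiS1 psiK1[OF that] by simp
    have S1C2: "a - S1 a \<in> dual_cone KA" if "a \<in> dual_cone KA" for a
    proof -
      have "\<phi> (a - S1 a) = \<psi>2 a" using linear_diff[OF linphi] phiS1 phisum by simp
      then show ?thesis using iso[of "a - S1 a"] psiK2[OF that] by simp
    qed
    define T where "T = adjoint S1"
    have lT: "linear T" unfolding T_def using adjoint_linear[OF lS1] .
    have adj: "c \<bullet> T x = S1 c \<bullet> x" for c x unfolding T_def using adjoint_works[OF lS1] .
    have T1: "T x \<in> KA" if x: "x \<in> KA" for x
    proof -
      have "T x \<in> dual_cone (dual_cone KA)"
      proof -
        have "0 \<le> T x \<bullet> c" if c: "c \<in> dual_cone KA" for c
        proof -
        from c have "S1 c \<in> dual_cone KA" by (rule S1C)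
        then have "0 \<le> S1 c \<bullet> x" using x by (simp add: dual_cone_def)
        then show ?thesis by (simp add: adj inner_commute[of "T x"])
        qed
        then show ?thesis by (simp add: dual_cone_def[of "dual_cone KA"])
      qed
      then show ?thesis using ddA by simp
    qed
    have T2: "x - T x \<in> KA" if x: "x \<in> KA" for x
    proof -
      have "x - T x \<in> dual_cone (dual_cone KA)"
      proof -
        have "0 \<le> (x - T x) \<bullet> c" if c: "c \<in> dual_cone KA" for c
        proof -
        from c have "c - S1 c \<in> dual_cone KA" by (rule S1C2)
        then have "0 \<le> (c - S1 c) \<bullet> x" using x by (simp add: dual_cone_def)
        then show ?thesis by (simp add: adj inner_diff_left inner_diff_right inner_commute[of _ c])
        qed
        then show ?thesis by (simp add: dual_cone_def[of "dual_cone KA"])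
      qed
      then show ?thesis using ddA by simp
    qed
    obtain t where t: "t \<ge> 0" "\<forall>x. T x = t *\<^sub>R x"
      using key_scalar[OF cpgA uAi assms(2) lT T1 T2] by blast
    have S1t: "S1 c = t *\<^sub>R c" for c
    proof -
      have "(S1 c - t *\<^sub>R c) \<bullet> x = 0" for x
        using adj[of c x] t(2) by (simp add: inner_diff_left)
      then have "(S1 c - t *\<^sub>R c) \<bullet> (S1 c - t *\<^sub>R c) = 0" by blast
      then show ?thesis by simp
    qed
    show ?thesis
    proof (intro exI[of _ t] conjI allI)
      show "t \<ge> 0" by fact
      fix a b
      have "\<omega>1 a b = \<psi>1 a \<bullet> b" by (simp add: in1)
      also have "\<dots> = \<phi> (t *\<^sub>R a) \<bullet> b" using phiS1 S1t by metis
      also have "\<dots> = t * \<omega> a b" using linear_scale[OF linphi] phiin by simp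
      finally show "\<omega>1 a b = t * \<omega> a b" .
    qed
  qed
  show ?thesis unfolding pure_max_tensor_def
    using posw w1 rest by (metis zero_neq_one)
qed

end
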